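(* Let $\mathcal{T}$ be an MPQ-tree of an interval graph $G=(V,E)$, and let $(x,y)\in E$ with $node(x)=node(y)=Q$ a Q-node with sections $S_1,\dots,S_k$ and child subtrees $T_1,\dots,T_k$. If either (1) $x$ and $y$ have more than one common section in $Q$ (i.e. $|\{i: x\in S_i \text{ and } y\in S_i\}|\ge 2$), or (2) for some common section $S_i$ of $x$ and $y$ the set $V_i$ does not induce a clique in $G$, then $(x,y)$ is not an interval edge.
   Context: Graphs are finite and simple; for $G=(V,E)$ and $e\in E$, $G-e=(V,E\setminus\{e\})$. An edge $(x,y)\in E$ of an interval graph $G$ is an interval edge if $G-(x,y)$ is an interval graph. An MPQ-tree of an interval graph $G=(V,E)$, $V=\{1,\dots,n\}$, is a rooted plane tree whose nodes are P-nodes and Q-nodes. Each P-node carries a (possibly empty) set of vertices. A Q-node has $k\ge 3$ ordered positions $1,\dots,k$; position $i$ carries a set $S_i\subseteq V$ (the $i$-th section) and a child subtree $T_i$, which may be empty. Every vertex $v$ is assigned to exactly one node $node(v)$: either $v$ lies in the set of the P-node $node(v)$, or $node(v)$ is a Q-node and $v$ lies exactly in the sections $S_{l(v)},\dots,S_{r(v)}$ of it, with $l(v)<r(v)$. For a node with child subtrees $T_1,\dots,T_k$, $V_i$ denotes the set of vertices assigned to nodes of $T_i$ ($V_i=\emptyset$ if $T_i$ is empty). The maximal cliques of $G$ are in bijection with the descending paths from the root which at a P-node continue into one of its children (stopping if there is none) and at a Q-node choose a position $i$ and continue into $T_i$ (stopping if $T_i$ is empty); the clique is the union of the sets of the visited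 P-nodes and the chosen sections. Reading these cliques left to right gives a linear order of the maximal cliques, and the orders obtained this way after arbitrarily permuting children of P-nodes and reversing the positions of Q-nodes are exactly the orders of the maximal cliques of $G$ in which the cliques containing any fixed vertex are consecutive. Moreover, for every Q-node with sections $S_1,\dots,S_k$: (a) $V_1\neq\emptyset$ and $V_k\ne\emptyset$; (b) $S_1\subseteq S_2$ and $S_k\subseteq S_{k-1}$; (c) $S_{i-1}\cap S_i\neq\emptyset$ for $2\le i\le k$; (d) $S_{i-1}\neq S_i$ for $2\le i\le k$; (e) $(S_i\cap S_{i+1})\setminus S_1\neq\emptyset$ and $(S_{i-1}\cap S_i)\setminus S_k\neq\emptyset$ for $2\le i\le k-1$; (f) $(S_{i-1}\cup V_{i-1})\setminus S_i\neq\emptyset$ and $(S_i\cup V_i)\setminus S_{i-1}\neq\emptyset$ for $2\le i\le k$; and further (g) no empty P-node has an empty P-node as its parent, (h) no P-node has exactly one child whose root is a P-node, (i) every child subtree of a P-node is nonempty. *)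

theory Defs
  imports Complex_Main "HOL-Library.Multiset"
begin

definition simple_graph :: "'a set \<Rightarrow> ('a \<times> 'a) set \<Rightarrow> bool" where
  "simple_graph V E \<longleftrightarrow> finite V \<and> E \<subseteq> V \<times> V \<and> sym E \<and> irrefl E"

definition del_edge :: "('a \<times> 'a) set \<Rightarrow> 'a \<Rightarrow> 'a \<Rightarrow> ('a \<times> 'a) set" where
  "del_edge E x y = E - {(x, y), (y, x)}"

definition interval_graph :: "'a set \<Rightarrow> ('a \<times> 'a) set \<Rightarrow> bool" where
  "interval_graph V E \<longleftrightarrow> simple_graph V E \<and>
     (\<exists>a b :: 'a \<Rightarrow> real. (\<forall>v\<in>V. a v \<le> b v) \<and>
        (\<forall>u\<in>V. \<forall>v\<in>V. u \<noteq> v \<longrightarrow> ((u, v) \<in> E \<longleftrightarrow> {a u..b u} \<inter> {a v..b v} \<noteq> {})))"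

definition interval_edge :: "'a set \<Rightarrow> ('a \<times> 'a) set \<Rightarrow> 'a \<Rightarrow> 'a \<Rightarrow> bool" where
  "interval_edge V E x y \<longleftrightarrow> (x, y) \<in> E \<and> interval_graph V (del_edge E x y)"

definition is_clique :: "'a set \<Rightarrow> ('a \<times> 'a) set \<Rightarrow> 'a set \<Rightarrow> bool" where
  "is_clique V E C \<longleftrightarrow> C \<subseteq> V \<and> (\<forall>u\<in>C. \<forall>v\<in>C. u \<noteq> v \<longrightarrow> (u, v) \<in> E)"

definition max_cliques :: "'a set \<Rightarrow> ('a \<times> 'a) set \<Rightarrow> 'a set set" where
  "max_cliques V E = {C. is_clique V E C \<and> (\<forall>D. is_clique V E D \<and> C \<subseteq> D \<longrightarrow> D = C)}"

definition consecutive_orders :: "'a set \<Rightarrow> ('a \<times> 'a) set \<Rightarrow> 'a set list set" where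
  "consecutive_orders V E = {L. distinct L \<and> set L = max_cliques V E \<and>
      (\<forall>v i j k. i \<le> j \<and> j \<le> k \<and> k < length L \<and> v \<in> L ! i \<and> v \<in> L ! k \<longrightarrow> v \<in> L ! j)}"

(* A Q-node carries its positions in order: position i has the section S_i and the
   child subtree T_i, which may be empty (None). *)
datatype 'a mpq = PNode "'a set" "'a mpq list" | QNode "('a set \<times> 'a mpq option) list"

fun own :: "'a mpq \<Rightarrow> 'a set" where
  "own (PNode S ts) = S"
| "own (QNode ps) = (\<Union>p\<in>set ps. fst p)"

inductive subtree_at :: "'a mpq \<Rightarrow> nat list \<Rightarrow> 'a mpq \<Rightarrow> bool" where
  at_root: "subtree_at T [] T"
| at_P: "i < length ts \<Longrightarrow> subtree_at (ts ! i) p T' \<Longrightarrow> subtree_at (PNode S ts) (i # p) T'"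
| at_Q: "i < length ps \<Longrightarrow> snd (ps ! i) = Some t \<Longrightarrow> subtree_at t p T' \<Longrightarrow> subtree_at (QNode ps) (i # p) T'"

definition verts :: "'a mpq \<Rightarrow> 'a set" where
  "verts T = (\<Union>{own T' | T' p. subtree_at T p T'})"

definition verts_opt :: "'a mpq option \<Rightarrow> 'a set" where
  "verts_opt t = (case t of None \<Rightarrow> {} | Some T \<Rightarrow> verts T)"

fun cliques :: "'a mpq \<Rightarrow> 'a set list" where
  "cliques (PNode S ts) = (if ts = [] then [S] else map ((\<union>) S) (concat (map cliques ts)))"
| "cliques (QNode ps) = concat (map (\<lambda>p. case snd p of None \<Rightarrow> [fst p]
                                      | Some t \<Rightarrow> map ((\<union>) (fst p)) (cliques t)) ps)"

inductive requiv :: "'a mpq \<Rightarrow> 'a mpq \<Rightarrow> bool" where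
  req_P: "list_all2 requiv ts us \<Longrightarrow> mset vs = mset us \<Longrightarrow> requiv (PNode S ts) (PNode S vs)"
| req_Q: "list_all2 (\<lambda>p q. fst p = fst q \<and> rel_option requiv (snd p) (snd q)) ps qs
          \<Longrightarrow> requiv (QNode ps) (QNode qs)"
| req_Qrev: "list_all2 (\<lambda>p q. fst p = fst q \<and> rel_option requiv (snd p) (snd q)) ps qs
          \<Longrightarrow> requiv (QNode ps) (QNode (rev qs))"

(* Local conditions at a Q-node with positions ps (0-indexed: S_i = fst (ps ! i),
   V_i = verts_opt (snd (ps ! i))). *)
definition q_node_ok :: "('a set \<times> 'a mpq option) list \<Rightarrow> bool" where
  "q_node_ok ps \<longleftrightarrow> (let k = length ps; S = (\<lambda>i. fst (ps ! i)); Vi = (\<lambda>i. verts_opt (snd (ps ! i))) in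
     k \<ge> 3 \<and>
     (\<forall>v\<in>own (QNode ps). \<exists>l r. l < r \<and> r < k \<and> {i. i < k \<and> v \<in> S i} = {l..r}) \<and>
     Vi 0 \<noteq> {} \<and> Vi (k - 1) \<noteq> {} \<and>
     S 0 \<subseteq> S 1 \<and> S (k - 1) \<subseteq> S (k - 2) \<and>
     (\<forall>i. 1 \<le> i \<and> i < k \<longrightarrow> S (i - 1) \<inter> S i \<noteq> {}) \<and>
     (\<forall>i. 1 \<le> i \<and> i < k \<longrightarrow> S (i - 1) \<noteq> S i) \<and>
     (\<forall>i. 1 \<le> i \<and> i < k - 1 \<longrightarrow> (S i \<inter> S (i + 1)) - S 0 \<noteq> {} \<and> (S (i - 1) \<inter> S i) - S (k - 1) \<noteq> {}) \<and>
     (\<forall>i. 1 \<le> i \<and> i < k \<longrightarrow> (S (i - 1) \<union> Vi (i - 1)) - S i \<noteq> {} \<and> (S i \<union> Vi i) - S (i - 1) \<noteq> {}))"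

(* Local conditions at a P-node: (g), (h); (i) holds by construction of the datatype *)
definition p_node_ok :: "'a set \<Rightarrow> 'a mpq list \<Rightarrow> bool" where
  "p_node_ok S ts \<longleftrightarrow>
     (S = {} \<longrightarrow> (\<forall>t\<in>set ts. \<forall>ts'. t \<noteq> PNode {} ts')) \<and>
     \<not> (length ts = 1 \<and> (\<exists>S' ts'. ts ! 0 = PNode S' ts'))"

definition mpq_tree :: "'a set \<Rightarrow> ('a \<times> 'a) set \<Rightarrow> 'a mpq \<Rightarrow> bool" where
  "mpq_tree V E T \<longleftrightarrow>
     \<comment> \<open>every vertex is assigned to exactly one node\<close>
     verts T = V \<and>
     (\<forall>p q T1 T2. subtree_at T p T1 \<and> subtree_at T q T2 \<and> p \<noteq> q \<longrightarrow> own T1 \<inter> own T2 = {}) \<and>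
     \<comment> \<open>maximal cliques in bijection with the root-to-leaf paths\<close>
     distinct (cliques T) \<and> set (cliques T) = max_cliques V E \<and>
     \<comment> \<open>the orders obtained by reorderings are exactly the consecutive clique orders\<close>
     {cliques T' | T'. requiv T T'} = consecutive_orders V E \<and>
     \<comment> \<open>structural conditions\<close>
     (\<forall>p ps. subtree_at T p (QNode ps) \<longrightarrow> q_node_ok ps) \<and>
     (\<forall>p S ts. subtree_at T p (PNode S ts) \<longrightarrow> p_node_ok S ts)"

end

theory Submission
  imports Defs
begin

lemma subtree_trans:
  "subtree_at T p R \<Longrightarrow> subtree_at R q U \<Longrightarrow> subtree_at T (p @ q) U"
  by (induction rule: subtree_at.induct) (auto intro: subtree_at.intros)

lemma ex_set_nth: "(\<exists>t\<in>set ts. P t) \<longleftrightarrow> (\<exists>i<length ts. P (ts ! i))"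
  by (metis in_set_conv_nth nth_mem)

lemma verts_iff: "v \<in> verts t \<longleftrightarrow> (\<exists>p R. subtree_at t p R \<and> v \<in> own R)"
  unfolding verts_def by blast

lemma own_verts: "own t \<subseteq> verts t"
proof
  fix v assume "v \<in> own t"
  then show "v \<in> verts t" unfolding verts_iff using subtree_at.at_root by blast
qed

lemma verts_mono: "subtree_at T p R \<Longrightarrow> verts R \<subseteq> verts T"
proof
  fix v assume "subtree_at T p R" "v \<in> verts R"
  then obtain q U where "subtree_at R q U" "v \<in> own U" unfolding verts_iff by blast
  then show "v \<in> verts T" using subtree_trans[OF \<open>subtree_at T p R\<close>] unfolding verts_iff by blast
qed

lemma verts_P_child: "i < length ts \<Longrightarrow> verts (ts ! i) \<subseteq> verts (PNode S ts)"
  using verts_mono subtree_at.at_P subtree_at.at_root by blast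

lemma verts_Q_child: "j < length ps \<Longrightarrow> snd (ps ! j) = Some t \<Longrightarrow> verts t \<subseteq> verts (QNode ps)"
  using verts_mono subtree_at.at_Q subtree_at.at_root by blast

lemma sub_P_cases: "subtree_at (PNode S ts) p R \<Longrightarrow>
  (p = [] \<and> R = PNode S ts) \<or> (\<exists>i p'. p = i # p' \<and> i < length ts \<and> subtree_at (ts ! i) p' R)"
  by (erule subtree_at.cases) auto

lemma sub_Q_cases: "subtree_at (QNode ps) p R \<Longrightarrow>
  (p = [] \<and> R = QNode ps) \<or> (\<exists>i t p'. p = i # p' \<and> i < length ps \<and> snd (ps ! i) = Some t \<and> subtree_at t p' R)"
  by (erule subtree_at.cases) auto

lemma verts_P_cases: "v \<in> verts (PNode S ts) \<Longrightarrow> v \<in> S \<or> (\<exists>i<length ts. v \<in> verts (ts ! i))"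
proof -
  assume "v \<in> verts (PNode S ts)"
  then obtain p R where pr: "subtree_at (PNode S ts) p R" "v \<in> own R" unfolding verts_iff by blast
  from sub_P_cases[OF pr(1)] show ?thesis
  proof
    assume "p = [] \<and> R = PNode S ts" then show ?thesis using pr(2) by simp
  next
    assume "\<exists>i p'. p = i # p' \<and> i < length ts \<and> subtree_at (ts ! i) p' R"
    then obtain i p' where "i < length ts" "subtree_at (ts ! i) p' R" by blast
    then show ?thesis using pr(2) unfolding verts_iff by blast
  qed
qed

lemma verts_Q_cases: "v \<in> verts (QNode ps) \<Longrightarrow> v \<in> own (QNode ps) \<or>
   (\<exists>j<length ps. \<exists>t. snd (ps ! j) = Some t \<and> v \<in> verts t)"
proof -
  assume "v \<in> verts (QNode ps)"
  then obtain p R where pr: "subtree_at (QNode ps) p R" "v \<in> own R" unfolding verts_iff by blast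
  from sub_Q_cases[OF pr(1)] show ?thesis
  proof
    assume "p = [] \<and> R = QNode ps" then show ?thesis using pr(2) by simp
  next
    assume "\<exists>i t p'. p = i # p' \<and> i < length ps \<and> snd (ps ! i) = Some t \<and> subtree_at t p' R"
    then obtain i t p' where "i < length ps" "snd (ps ! i) = Some t" "subtree_at t p' R" by blast
    then show ?thesis using pr(2) unfolding verts_iff by blast
  qed
qed

lemma cliquesQ_iff: "c \<in> set (cliques (QNode ps)) \<longleftrightarrow>
  (\<exists>j<length ps. (snd (ps ! j) = None \<and> c = fst (ps ! j)) \<or>
     (\<exists>t c'. snd (ps ! j) = Some t \<and> c' \<in> set (cliques t) \<and> c = fst (ps ! j) \<union> c'))"
proof
  assume "c \<in> set (cliques (QNode ps))"
  then obtain p where p: "p \<in> set ps"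
    "c \<in> set (case snd p of None \<Rightarrow> [fst p] | Some t \<Rightarrow> map ((\<union>) (fst p)) (cliques t))"
    by auto
  then obtain j where "j < length ps" "ps ! j = p" by (metis in_set_conv_nth)
  with p have j: "j < length ps"
    "c \<in> set (case snd (ps ! j) of None \<Rightarrow> [fst (ps ! j)] | Some t \<Rightarrow> map ((\<union>) (fst (ps ! j))) (cliques t))"
    by auto
  then show "\<exists>j<length ps. (snd (ps ! j) = None \<and> c = fst (ps ! j)) \<or>
     (\<exists>t c'. snd (ps ! j) = Some t \<and> c' \<in> set (cliques t) \<and> c = fst (ps ! j) \<union> c')"
    by (cases "snd (ps ! j)") auto
next
  assume "\<exists>j<length ps. (snd (ps ! j) = None \<and> c = fst (ps ! j)) \<or>
     (\<exists>t c'. snd (ps ! j) = Some t \<and> c' \<in> set (cliques t) \<and> c = fst (ps ! j) \<union> c')"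
  then obtain j where j0: "j < length ps" and
    d: "(snd (ps ! j) = None \<and> c = fst (ps ! j)) \<or>
     (\<exists>t c'. snd (ps ! j) = Some t \<and> c' \<in> set (cliques t) \<and> c = fst (ps ! j) \<union> c')" by blast
  have j: "c \<in> set (case snd (ps ! j) of None \<Rightarrow> [fst (ps ! j)] | Some t \<Rightarrow> map ((\<union>) (fst (ps ! j))) (cliques t))"
    using d by (cases "snd (ps ! j)") auto
  have eq: "cliques (QNode ps) = concat (map (\<lambda>p. case snd p of None \<Rightarrow> [fst p] | Some t \<Rightarrow> map ((\<union>) (fst p)) (cliques t)) ps)"
    by simp
  show "c \<in> set (cliques (QNode ps))"
    unfolding eq set_concat set_map using j nth_mem[OF j0] by blast
qed

lemma cliquesP_iff: "ts \<noteq> [] \<Longrightarrow> c \<in> set (cliques (PNode S ts)) \<longleftrightarrow>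
  (\<exists>i<length ts. \<exists>c'\<in>set (cliques (ts ! i)). c = S \<union> c')"
proof -
  assume "ts \<noteq> []"
  then have "c \<in> set (cliques (PNode S ts)) \<longleftrightarrow> (\<exists>t\<in>set ts. \<exists>c'\<in>set (cliques t). c = S \<union> c')"
    by auto
  also have "\<dots> \<longleftrightarrow> (\<exists>i<length ts. \<exists>c'\<in>set (cliques (ts ! i)). c = S \<union> c')"
    by (rule ex_set_nth)
  finally show ?thesis .
qed

lemma cliquesQ_D: "c \<in> set (cliques (QNode ps)) \<Longrightarrow>
  (\<exists>j<length ps. (snd (ps ! j) = None \<and> c = fst (ps ! j)) \<or>
     (\<exists>t c'. snd (ps ! j) = Some t \<and> c' \<in> set (cliques t) \<and> c = fst (ps ! j) \<union> c'))"
  by (rule cliquesQ_iff[THEN iffD1])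

lemma cliquesQ_I1: "j < length ps \<Longrightarrow> snd (ps ! j) = None \<Longrightarrow> fst (ps ! j) \<in> set (cliques (QNode ps))"
  by (rule cliquesQ_iff[THEN iffD2]) blast

lemma cliquesQ_I2: "j < length ps \<Longrightarrow> snd (ps ! j) = Some t \<Longrightarrow> c' \<in> set (cliques t) \<Longrightarrow>
   fst (ps ! j) \<union> c' \<in> set (cliques (QNode ps))"
  by (rule cliquesQ_iff[THEN iffD2]) blast

lemma cliquesP_D: "ts \<noteq> [] \<Longrightarrow> c \<in> set (cliques (PNode S ts)) \<Longrightarrow>
  (\<exists>i<length ts. \<exists>c'\<in>set (cliques (ts ! i)). c = S \<union> c')"
  by (rule cliquesP_iff[THEN iffD1])

lemma cliquesP_I: "i < length ts \<Longrightarrow> c' \<in> set (cliques (ts ! i)) \<Longrightarrow> S \<union> c' \<in> set (cliques (PNode S ts))"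
  by (rule cliquesP_iff[THEN iffD2]) auto

lemma cliques_sub_verts: "c \<in> set (cliques t) \<Longrightarrow> c \<subseteq> verts t"
proof (induction t arbitrary: c)
  case (PNode S ts)
  show ?case
  proof (cases "ts = []")
    case True
    then show ?thesis using PNode.prems own_verts[of "PNode S ts"] by auto
  next
    case False
    then obtain i c' where i: "i < length ts" "c' \<in> set (cliques (ts ! i))" "c = S \<union> c'"
      using cliquesP_D[OF False PNode.prems] by blast
    have "c' \<subseteq> verts (ts ! i)" using PNode.IH i by auto
    then show ?thesis using i verts_P_child[of i ts S] own_verts[of "PNode S ts"] by auto
  qed
next
  case (QNode ps)
  then obtain j where j: "j < length ps" and
    "(snd (ps ! j) = None \<and> c = fst (ps ! j)) \<or>
     (\<exists>t c'. snd (ps ! j) = Some t \<and> c' \<in> set (cliques t) \<and> c = fst (ps ! j) \<union> c')"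
    using cliquesQ_D[OF QNode.prems] by blast
  moreover have "fst (ps ! j) \<subseteq> verts (QNode ps)"
  proof -
    have "fst (ps ! j) \<subseteq> own (QNode ps)" using nth_mem[OF j] by auto
    then show ?thesis using own_verts[of "QNode ps"] by blast
  qed
  moreover have "c' \<subseteq> verts (QNode ps)" if "snd (ps ! j) = Some t" "c' \<in> set (cliques t)" for t c'
  proof -
    have "ps ! j \<in> set ps" using j by simp
    moreover have "snd (ps ! j) \<in> Basic_BNFs.snds (ps ! j)"
      by (cases "ps ! j") (simp add: prod_set_simps)
    ultimately have "c' \<subseteq> verts t" using QNode.IH[of "ps ! j" "snd (ps ! j)" t c'] that
      by auto
    then show ?thesis using verts_Q_child[OF j that(1)] by auto
  qed
  ultimately show ?case by auto
qed

definition qne :: "'a mpq \<Rightarrow> bool" where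
  "qne t \<longleftrightarrow> (\<forall>p ps. subtree_at t p (QNode ps) \<longrightarrow> ps \<noteq> [])"

lemma qne_P: "qne (PNode S ts) \<Longrightarrow> i < length ts \<Longrightarrow> qne (ts ! i)"
  unfolding qne_def using subtree_at.at_P by blast

lemma qne_Q: "qne (QNode ps) \<Longrightarrow> j < length ps \<Longrightarrow> snd (ps ! j) = Some t \<Longrightarrow> qne t"
  unfolding qne_def using subtree_at.at_Q by blast

lemma qne_sub: "qne T \<Longrightarrow> subtree_at T p R \<Longrightarrow> qne R"
  unfolding qne_def using subtree_trans by blast

lemma cliques_cover: "qne t \<Longrightarrow> cliques t \<noteq> [] \<and> (\<forall>v\<in>verts t. \<exists>c\<in>set (cliques t). v \<in> c)"
proof (induction t)
  case (PNode S ts)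
  show ?case
  proof (cases "ts = []")
    case True
    have "verts (PNode S ts) \<subseteq> S" using verts_P_cases True by fastforce
    then show ?thesis using True by auto
  next
    case False
    have IH: "cliques (ts ! i) \<noteq> [] \<and> (\<forall>v\<in>verts (ts ! i). \<exists>c\<in>set (cliques (ts ! i)). v \<in> c)"
      if "i < length ts" for i
      using PNode.IH[OF nth_mem[OF that] qne_P[OF PNode.prems that]] .
    obtain c0 where c0: "c0 \<in> set (cliques (ts ! 0))" using IH[of 0] False by (metis length_greater_0_conv list.set_intros(1) neq_Nil_conv)
    have "S \<union> c0 \<in> set (cliques (PNode S ts))" using cliquesP_I[OF _ c0] False by auto
    moreover have "\<exists>c\<in>set (cliques (PNode S ts)). v \<in> c" if "v \<in> verts (PNode S ts)" for v
    proof -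
      from verts_P_cases[OF that] show ?thesis
      proof
        assume "v \<in> S" then show ?thesis using \<open>S \<union> c0 \<in> _\<close> by blast
      next
        assume "\<exists>i<length ts. v \<in> verts (ts ! i)"
        then obtain i where i: "i < length ts" "v \<in> verts (ts ! i)" by blast
        then obtain c where "c \<in> set (cliques (ts ! i))" "v \<in> c" using IH by blast
        then show ?thesis using cliquesP_I[OF i(1), of c S] by blast
      qed
    qed
    ultimately show ?thesis by force
  qed
next
  case (QNode ps)
  have snds: "snd p \<in> Basic_BNFs.snds p" for p :: "'a set \<times> 'a mpq option"
    by (cases p) (simp add: prod_set_simps)
  have IH: "cliques t \<noteq> [] \<and> (\<forall>v\<in>verts t. \<exists>c\<in>set (cliques t). v \<in> c)"
    if "j < length ps" "snd (ps ! j) = Some t" for j t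
    using QNode.IH[OF nth_mem[OF that(1)] snds, of t] that qne_Q[OF QNode.prems that] by auto
  have pos: "\<exists>c\<in>set (cliques (QNode ps)). fst (ps ! j) \<subseteq> c" if j: "j < length ps" for j
  proof (cases "snd (ps ! j)")
    case None
    then show ?thesis using cliquesQ_I1[OF j] by blast
  next
    case (Some t)
    then obtain c' where "c' \<in> set (cliques t)" using IH[OF j] by (metis list.set_intros(1) neq_Nil_conv)
    then have "fst (ps ! j) \<union> c' \<in> set (cliques (QNode ps))"
      using cliquesQ_I2[OF j Some] by blast
    then show ?thesis by blast
  qed
  have ne: "ps \<noteq> []" using QNode.prems unfolding qne_def using subtree_at.at_root by blast
  then obtain c0 where "c0 \<in> set (cliques (QNode ps))" using pos[of 0] by blast
  then have "cliques (QNode ps) \<noteq> []" by (metis empty_iff empty_set)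
  moreover have "\<exists>c\<in>set (cliques (QNode ps)). v \<in> c" if "v \<in> verts (QNode ps)" for v
  proof -
    from verts_Q_cases[OF that] show ?thesis
    proof
      assume "v \<in> own (QNode ps)"
      then have "\<exists>p\<in>set ps. v \<in> fst p" by simp
      then obtain j where "j < length ps" "v \<in> fst (ps ! j)" unfolding ex_set_nth by blast
      then show ?thesis using pos by blast
    next
      assume "\<exists>j<length ps. \<exists>t. snd (ps ! j) = Some t \<and> v \<in> verts t"
      then obtain j t where j: "j < length ps" "snd (ps ! j) = Some t" "v \<in> verts t" by blast
      then obtain c where "c \<in> set (cliques t)" "v \<in> c" using IH by blast
      then have "fst (ps ! j) \<union> c \<in> set (cliques (QNode ps))"
        using cliquesQ_I2[OF j(1,2)] by blast
      then show ?thesis using \<open>v \<in> c\<close> by blast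
    qed
  qed
  ultimately show ?case by blast
qed

lemma clique_extend: "subtree_at T p R \<Longrightarrow> c \<in> set (cliques R) \<Longrightarrow> \<exists>C\<in>set (cliques T). c \<subseteq> C"
proof (induction arbitrary: c rule: subtree_at.induct)
  case (at_root T)
  then show ?case by blast
next
  case (at_P i ts p T' S)
  then obtain C where "C \<in> set (cliques (ts ! i))" "c \<subseteq> C" by blast
  moreover have "ts \<noteq> []" using at_P by auto
  ultimately show ?case using cliquesP_I[OF at_P(1), of C S] by blast
next
  case (at_Q i ps t p T')
  then obtain C where "C \<in> set (cliques t)" "c \<subseteq> C" by blast
  then show ?case using cliquesQ_I2[OF at_Q(1,2)] by blast
qed

definition disj :: "'a mpq \<Rightarrow> bool" where
  "disj T \<longleftrightarrow> (\<forall>p q T1 T2. subtree_at T p T1 \<and> subtree_at T q T2 \<and> p \<noteq> q \<longrightarrow> own T1 \<inter> own T2 = {})"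

lemma disj_sub: "disj T \<Longrightarrow> subtree_at T p R \<Longrightarrow> disj R"
proof -
  assume d: "disj T" and s: "subtree_at T p R"
  have D: "\<And>p q T1 T2. subtree_at T p T1 \<Longrightarrow> subtree_at T q T2 \<Longrightarrow> p \<noteq> q \<Longrightarrow> own T1 \<inter> own T2 = {}"
    using d unfolding disj_def by blast
  show "disj R" unfolding disj_def
  proof (intro allI impI)
    fix p' q' T1 T2 assume a: "subtree_at R p' T1 \<and> subtree_at R q' T2 \<and> p' \<noteq> q'"
    have "p @ p' \<noteq> p @ q'" using a by simp
    then show "own T1 \<inter> own T2 = {}"
      using D[OF subtree_trans[OF s] subtree_trans[OF s]] a by blast
  qed
qed

lemma disj_verts:
  assumes "disj T" "subtree_at T p1 R1" "subtree_at T p2 R2" "\<And>q1 q2. p1 @ q1 \<noteq> p2 @ q2"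
  shows "verts R1 \<inter> verts R2 = {}"
proof (rule ccontr)
  assume "verts R1 \<inter> verts R2 \<noteq> {}"
  then obtain v where "v \<in> verts R1" "v \<in> verts R2" by blast
  then obtain q1 U1 q2 U2 where "subtree_at R1 q1 U1" "v \<in> own U1" "subtree_at R2 q2 U2" "v \<in> own U2"
    unfolding verts_iff by blast
  moreover have s1: "subtree_at T (p1 @ q1) U1" using subtree_trans[OF assms(2)] calculation by blast
  moreover have s2: "subtree_at T (p2 @ q2) U2" using subtree_trans[OF assms(3)] calculation by blast
  moreover have D: "\<And>p q T1 T2. subtree_at T p T1 \<Longrightarrow> subtree_at T q T2 \<Longrightarrow> p \<noteq> q \<Longrightarrow> own T1 \<inter> own T2 = {}"
    using assms(1) unfolding disj_def by blast
  ultimately have "own U1 \<inter> own U2 = {}" using D[OF s1 s2 assms(4)] by blast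
  then show False using \<open>v \<in> own U1\<close> \<open>v \<in> own U2\<close> by blast
qed

lemma disj_own_verts:
  assumes "disj T" "subtree_at T p1 R1" "subtree_at T p2 R2" "\<And>q. p1 \<noteq> p2 @ q"
  shows "own R1 \<inter> verts R2 = {}"
proof (rule ccontr)
  assume "own R1 \<inter> verts R2 \<noteq> {}"
  then obtain v where "v \<in> own R1" "v \<in> verts R2" by blast
  then obtain q2 U2 where "subtree_at R2 q2 U2" "v \<in> own U2"
    unfolding verts_iff by blast
  moreover have s2: "subtree_at T (p2 @ q2) U2" using subtree_trans[OF assms(3)] calculation by blast
  moreover have D: "\<And>p q T1 T2. subtree_at T p T1 \<Longrightarrow> subtree_at T q T2 \<Longrightarrow> p \<noteq> q \<Longrightarrow> own T1 \<inter> own T2 = {}"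
    using assms(1) unfolding disj_def by blast
  ultimately have "own R1 \<inter> own U2 = {}" using D[OF assms(2) s2 assms(4)] by blast
  then show False using \<open>v \<in> own R1\<close> \<open>v \<in> own U2\<close> by blast
qed

lemma restrict:
  "subtree_at T p R \<Longrightarrow> disj T \<Longrightarrow> C \<in> set (cliques T) \<Longrightarrow>
   C \<inter> verts R = {} \<or> C \<inter> verts R \<in> set (cliques R)"
proof (induction arbitrary: C rule: subtree_at.induct)
  case (at_root T)
  then show ?case using cliques_sub_verts by (metis inf.absorb1)
next
  case (at_P i ts p T' S)
  have sub: "subtree_at (PNode S ts) [i] (ts ! i)" using subtree_at.at_P[OF at_P(1) subtree_at.at_root] .
  have dS: "S \<inter> verts (ts ! i) = {}"
    using disj_own_verts[OF at_P(4) subtree_at.at_root sub] by auto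
  have IH: "C' \<inter> verts T' = {} \<or> C' \<inter> verts T' \<in> set (cliques T')" if "C' \<in> set (cliques (ts ! i))" for C'
    using at_P(3)[OF disj_sub[OF at_P(4) sub] that] .
  have T'sub: "verts T' \<subseteq> verts (ts ! i)" using verts_mono at_P(2) by blast
  have ne: "ts \<noteq> []" using at_P(1) by auto
  obtain k c' where k: "k < length ts" "c' \<in> set (cliques (ts ! k))" "C = S \<union> c'"
    using cliquesP_D[OF ne at_P(5)] by blast
  show ?case
  proof (cases "k = i")
    case True
    then have "C \<inter> verts T' = c' \<inter> verts T'" using k dS T'sub by auto
    then show ?thesis using IH k True by auto
  next
    case False
    have subk: "subtree_at (PNode S ts) [k] (ts ! k)" using subtree_at.at_P[OF k(1) subtree_at.at_root] .
    have "verts (ts ! k) \<inter> verts (ts ! i) = {}"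
      using disj_verts[OF at_P(4) subk sub] False by auto
    then have "C \<inter> verts T' = {}" using k dS T'sub cliques_sub_verts[OF k(2)] by auto
    then show ?thesis by blast
  qed
next
  case (at_Q i ps t p T')
  have sub: "subtree_at (QNode ps) [i] t" using subtree_at.at_Q[OF at_Q(1,2) subtree_at.at_root] .
  have dS: "own (QNode ps) \<inter> verts t = {}"
    using disj_own_verts[OF at_Q(5) subtree_at.at_root sub] by auto
  have IH: "C' \<inter> verts T' = {} \<or> C' \<inter> verts T' \<in> set (cliques T')" if "C' \<in> set (cliques t)" for C'
    using at_Q(4)[OF disj_sub[OF at_Q(5) sub] that] .
  have T'sub: "verts T' \<subseteq> verts t" using verts_mono at_Q(3) by blast
  obtain k where k: "k < length ps" and
    kc: "(snd (ps ! k) = None \<and> C = fst (ps ! k)) \<or>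
     (\<exists>t c'. snd (ps ! k) = Some t \<and> c' \<in> set (cliques t) \<and> C = fst (ps ! k) \<union> c')"
    using cliquesQ_D[OF at_Q(6)] by blast
  have fk: "fst (ps ! k) \<subseteq> own (QNode ps)" using nth_mem[OF k] by auto
  from kc show ?case
  proof
    assume "snd (ps ! k) = None \<and> C = fst (ps ! k)"
    then show ?thesis using fk dS T'sub by auto
  next
    assume "\<exists>t c'. snd (ps ! k) = Some t \<and> c' \<in> set (cliques t) \<and> C = fst (ps ! k) \<union> c'"
    then obtain t' c' where tc: "snd (ps ! k) = Some t'" "c' \<in> set (cliques t')" "C = fst (ps ! k) \<union> c'"
      by blast
    show ?thesis
    proof (cases "k = i")
      case True
      then have "t' = t" using tc at_Q(2) by simp
      then have "C \<inter> verts T' = c' \<inter> verts T'" using tc fk dS T'sub by auto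
      then show ?thesis using IH tc \<open>t' = t\<close> by auto
    next
      case False
      have subk: "subtree_at (QNode ps) [k] t'" using subtree_at.at_Q[OF k tc(1) subtree_at.at_root] .
      have "verts t' \<inter> verts t = {}"
        using disj_verts[OF at_Q(5) subk sub] False by auto
      then have "C \<inter> verts T' = {}" using tc fk dS T'sub cliques_sub_verts[OF tc(2)] by auto
      then show ?thesis by blast
    qed
  qed
qed

lemma ivl_meet:
  fixes a b c d :: real
  assumes "a \<le> b" "c \<le> d"
  shows "{a..b} \<inter> {c..d} \<noteq> {} \<longleftrightarrow> a \<le> d \<and> c \<le> b"
proof
  assume "{a..b} \<inter> {c..d} \<noteq> {}"
  then obtain z where "z \<in> {a..b} \<inter> {c..d}" by blast
  then have "a \<le> z" "z \<le> b" "c \<le> z" "z \<le> d" by auto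
  then show "a \<le> d \<and> c \<le> b" by linarith
next
  assume "a \<le> d \<and> c \<le> b"
  then have "max a c \<in> {a..b} \<inter> {c..d}" using assms by (auto simp: max_def)
  then show "{a..b} \<inter> {c..d} \<noteq> {}" by blast
qed

lemma no_c4:
  assumes "interval_graph V E'" "x \<in> V" "y \<in> V" "u \<in> V" "w \<in> V" "x \<noteq> y" "u \<noteq> w"
    "(x, y) \<notin> E'" "(u, w) \<notin> E'" "(x, u) \<in> E'" "(y, u) \<in> E'" "(x, w) \<in> E'" "(y, w) \<in> E'"
  shows False
proof -
  have irr: "irrefl E'" using assms(1) unfolding interval_graph_def simple_graph_def by blast
  then have ne: "x \<noteq> u" "y \<noteq> u" "x \<noteq> w" "y \<noteq> w" using assms(10-13) unfolding irrefl_def by auto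
  obtain a b :: "_ \<Rightarrow> real" where ab: "\<forall>v\<in>V. a v \<le> b v"
    "\<forall>u\<in>V. \<forall>v\<in>V. u \<noteq> v \<longrightarrow> ((u, v) \<in> E' \<longleftrightarrow> {a u..b u} \<inter> {a v..b v} \<noteq> {})"
    using assms(1) unfolding interval_graph_def by blast
  have le: "a x \<le> b x" "a y \<le> b y" "a u \<le> b u" "a w \<le> b w" using ab(1) assms(2-5) by auto
  have "\<not> (a x \<le> b y \<and> a y \<le> b x)" using ab(2) assms(2,3,6,8) ivl_meet[OF le(1,2)] by blast
  moreover have "\<not> (a u \<le> b w \<and> a w \<le> b u)" using ab(2) assms(4,5,7,9) ivl_meet[OF le(3,4)] by blast
  moreover have "a x \<le> b u \<and> a u \<le> b x" using ab(2) assms(2,4,10) ne ivl_meet[OF le(1,3)] by blast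
  moreover have "a y \<le> b u \<and> a u \<le> b y" using ab(2) assms(3,4,11) ne ivl_meet[OF le(2,3)] by blast
  moreover have "a x \<le> b w \<and> a w \<le> b x" using ab(2) assms(2,5,12) ne ivl_meet[OF le(1,4)] by blast
  moreover have "a y \<le> b w \<and> a w \<le> b y" using ab(2) assms(3,5,13) ne ivl_meet[OF le(2,4)] by blast
  ultimately show False using le by linarith
qed

lemma max_clique_exists:
  assumes "finite V" "is_clique V E D"
  shows "\<exists>C\<in>max_cliques V E. D \<subseteq> C"
proof -
  let ?A = "{C. is_clique V E C \<and> D \<subseteq> C}"
  have "?A \<subseteq> Pow V" unfolding is_clique_def by blast
  moreover have "finite (Pow V)" using assms(1) by simp
  ultimately have fA: "finite ?A" by (rule finite_subset)
  have neA: "?A \<noteq> {}"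
  proof -
    have "D \<in> ?A" using assms(2) by simp
    then show ?thesis by (metis empty_iff)
  qed
  obtain m where m: "m \<in> ?A" "\<forall>b\<in>?A. m \<le> b \<longrightarrow> m = b"
    using finite_has_maximal[OF fA neA] by (elim bexE) 
  have "m \<in> max_cliques V E" unfolding max_cliques_def
  proof (intro CollectI conjI allI impI)
    show "is_clique V E m" using m(1) by simp
  next
    fix D' assume "is_clique V E D' \<and> m \<subseteq> D'"
    then have "D' \<in> ?A" "m \<le> D'" using m(1) by auto
    then show "D' = m" using m(2) by (metis (no_types))
  qed
  then show ?thesis using m by blast
qed

lemma finish:
  assumes "interval_graph V E" "set (cliques T) = max_cliques V E" "x \<noteq> y"
    "u \<noteq> x" "u \<noteq> y" "w \<noteq> x" "w \<noteq> y" "u \<noteq> w" "(u, w) \<notin> E"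
    "C1 \<in> set (cliques T)" "x \<in> C1" "y \<in> C1" "u \<in> C1"
    "C2 \<in> set (cliques T)" "x \<in> C2" "y \<in> C2" "w \<in> C2"
  shows "\<not> interval_edge V E x y"
proof
  assume "interval_edge V E x y"
  then have ig: "interval_graph V (del_edge E x y)" unfolding interval_edge_def by blast
  have c1: "is_clique V E C1" and c2: "is_clique V E C2"
    using assms(2,10,14) unfolding max_cliques_def by auto
  have inV: "x \<in> V" "y \<in> V" "u \<in> V" "w \<in> V" using c1 c2 assms unfolding is_clique_def by auto
  have "(x, u) \<in> E" "(y, u) \<in> E" "(x, w) \<in> E" "(y, w) \<in> E"
    using c1 c2 assms unfolding is_clique_def by auto
  then show False
    using no_c4[OF ig inV assms(3,8)] assms(3-9) unfolding del_edge_def by auto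
qed

lemma nonadj:
  assumes "finite V" "sym E" "set (cliques T) = max_cliques V E" "u \<in> V" "w \<in> V"
    "\<not> (\<exists>C\<in>set (cliques T). u \<in> C \<and> w \<in> C)"
  shows "(u, w) \<notin> E"
proof
  assume "(u, w) \<in> E"
  then have "is_clique V E {u, w}" using assms(2,4,5) unfolding is_clique_def sym_def by auto
  then obtain C where "C \<in> max_cliques V E" "{u, w} \<subseteq> C" using max_clique_exists assms(1) by blast
  then show False using assms(3,6) by auto
qed

theorem mainTheorem4:
  fixes V :: "'a set" and E :: "('a \<times> 'a) set" and T :: "'a mpq"
    and pos :: "nat list" and ps :: "('a set \<times> 'a mpq option) list" and x y :: 'a
  assumes "interval_graph V E"
    and "mpq_tree V E T"
    and "(x, y) \<in> E"
    and "subtree_at T pos (QNode ps)"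
    and "x \<in> own (QNode ps)" and "y \<in> own (QNode ps)"
    and "card {i. i < length ps \<and> x \<in> fst (ps ! i) \<and> y \<in> fst (ps ! i)} \<ge> 2
         \<or> (\<exists>i < length ps. x \<in> fst (ps ! i) \<and> y \<in> fst (ps ! i) \<and>
               \<not> is_clique V E (verts_opt (snd (ps ! i))))"
  shows "\<not> interval_edge V E x y"
proof -
  have sg: "finite V" "sym E" "irrefl E"
    using assms(1) unfolding interval_graph_def simple_graph_def by auto
  have xy: "x \<noteq> y" using sg(3) assms(3) unfolding irrefl_def by auto
  have VT: "verts T = V" and dT: "disj T" and cl: "set (cliques T) = max_cliques V E"
    and qok_all: "\<And>p ps'. subtree_at T p (QNode ps') \<Longrightarrow> q_node_ok ps'"
    using assms(2) unfolding mpq_tree_def disj_def by auto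
  have qneT: "qne T" unfolding qne_def using qok_all unfolding q_node_ok_def Let_def by fastforce
  have qok: "q_node_ok ps" using qok_all assms(4) .
  let ?k = "length ps"
  have k3: "?k \<ge> 3" using qok unfolding q_node_ok_def Let_def by auto
  have ivl: "\<forall>v\<in>own (QNode ps). \<exists>l r. l < r \<and> r < ?k \<and> {i. i < ?k \<and> v \<in> fst (ps ! i)} = {l..r}"
    using qok unfolding q_node_ok_def Let_def by auto
  have fcond: "\<And>i. 1 \<le> i \<Longrightarrow> i < ?k \<Longrightarrow>
      (fst (ps ! (i - 1)) \<union> verts_opt (snd (ps ! (i - 1)))) - fst (ps ! i) \<noteq> {} \<and>
      (fst (ps ! i) \<union> verts_opt (snd (ps ! i))) - fst (ps ! (i - 1)) \<noteq> {}"
    using qok unfolding q_node_ok_def Let_def by auto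
  have Vi_sub: "verts_opt (snd (ps ! j)) \<subseteq> verts (QNode ps)" if "j < ?k" for j
    using verts_Q_child[OF that] unfolding verts_opt_def by (cases "snd (ps ! j)") auto
  have S_own: "fst (ps ! j) \<subseteq> own (QNode ps)" if "j < ?k" for j
    using nth_mem[OF that] by auto
  have QV: "verts (QNode ps) \<subseteq> V" using verts_mono[OF assms(4)] VT by auto
  have own_Vi: "own (QNode ps) \<inter> verts_opt (snd (ps ! j)) = {}" if "j < ?k" for j
  proof (cases "snd (ps ! j)")
    case (Some t)
    have "subtree_at T (pos @ [j]) t"
      using subtree_trans[OF assms(4) subtree_at.at_Q[OF that(1) Some subtree_at.at_root]] .
    then show ?thesis using disj_own_verts[OF dT assms(4)] Some unfolding verts_opt_def by auto
  qed (auto simp: verts_opt_def)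
  have Vi_Vi: "verts_opt (snd (ps ! i)) \<inter> verts_opt (snd (ps ! j)) = {}" if "i < ?k" "j < ?k" "i \<noteq> j" for i j
  proof (cases "snd (ps ! i)")
    case (Some t)
    show ?thesis
    proof (cases "snd (ps ! j)")
      case (Some t')
      have "subtree_at T (pos @ [i]) t" "subtree_at T (pos @ [j]) t'"
        using subtree_trans[OF assms(4) subtree_at.at_Q[OF that(1) \<open>snd (ps ! i) = Some t\<close> subtree_at.at_root]]
          subtree_trans[OF assms(4) subtree_at.at_Q[OF that(2) Some subtree_at.at_root]] by auto
      then show ?thesis using disj_verts[OF dT] Some \<open>snd (ps ! i) = Some t\<close> that(3)
        unfolding verts_opt_def by auto
    qed (auto simp: verts_opt_def)
  qed (auto simp: verts_opt_def)
  have at_pos: "\<exists>C\<in>set (cliques T). fst (ps ! j) \<union> {v} \<subseteq> C"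
    if "j < ?k" "v \<in> fst (ps ! j) \<union> verts_opt (snd (ps ! j))" for j v
  proof (cases "snd (ps ! j)")
    case None
    then have "fst (ps ! j) \<in> set (cliques (QNode ps))" using cliquesQ_I1 that(1) by blast
    moreover have "v \<in> fst (ps ! j)" using that(2) None by (simp add: verts_opt_def)
    ultimately show ?thesis using clique_extend[OF assms(4)] by blast
  next
    case (Some t)
    have "subtree_at T (pos @ [j]) t"
      using subtree_trans[OF assms(4) subtree_at.at_Q[OF that(1) Some subtree_at.at_root]] .
    then have cov: "cliques t \<noteq> [] \<and> (\<forall>v\<in>verts t. \<exists>c\<in>set (cliques t). v \<in> c)"
      using cliques_cover qne_sub[OF qneT] by blast
    obtain c' where c': "c' \<in> set (cliques t)" "v \<in> fst (ps ! j) \<or> v \<in> c'"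
    proof (cases "v \<in> verts t")
      case True then show ?thesis using cov that by blast
    next
      case False then have "v \<in> fst (ps ! j)" using \<open>v \<in> _ \<union> _\<close> Some by (simp add: verts_opt_def)
      then show ?thesis using cov that by (metis list.set_intros(1) neq_Nil_conv)
    qed
    then have "fst (ps ! j) \<union> c' \<in> set (cliques (QNode ps))" using cliquesQ_I2[OF that(1) Some] by blast
    then show ?thesis using clique_extend[OF assms(4)] c' by blast
  qed
  have where_: "\<exists>j<?k. C \<inter> verts (QNode ps) \<subseteq> fst (ps ! j) \<union> verts_opt (snd (ps ! j))"
    if "C \<in> set (cliques T)" "C \<inter> verts (QNode ps) \<noteq> {}" for C
  proof -
    have "C \<inter> verts (QNode ps) \<in> set (cliques (QNode ps))" using restrict[OF assms(4) dT that(1)] that(2) by blast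
    then obtain j where j: "j < ?k" and
      "(snd (ps ! j) = None \<and> C \<inter> verts (QNode ps) = fst (ps ! j)) \<or>
       (\<exists>t c'. snd (ps ! j) = Some t \<and> c' \<in> set (cliques t) \<and> C \<inter> verts (QNode ps) = fst (ps ! j) \<union> c')"
      using cliquesQ_D by blast
    then show ?thesis using cliques_sub_verts unfolding verts_opt_def by fastforce
  qed
  from assms(7) show ?thesis
  proof
    assume card2: "card {i. i < ?k \<and> x \<in> fst (ps ! i) \<and> y \<in> fst (ps ! i)} \<ge> 2"
    let ?A = "{i. i < ?k \<and> x \<in> fst (ps ! i) \<and> y \<in> fst (ps ! i)}"
    have fA: "finite ?A" by simp
    have "\<not> card ?A \<le> Suc 0" using card2 by simp
    then have "\<not> (\<forall>a\<in>?A. \<forall>b\<in>?A. a = b)" using card_le_Suc0_iff_eq[OF fA] by simp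
    then obtain a0 b0 where ab0: "a0 \<in> ?A" "b0 \<in> ?A" "a0 \<noteq> b0" by blast
    obtain a b where ab: "a \<in> ?A" "b \<in> ?A" "a < b"
    proof (cases "a0 < b0")
      case True then show ?thesis using that ab0 by blast
    next
      case False then have "b0 < a0" using ab0(3) by simp
      then show ?thesis using that ab0 by blast
    qed
    obtain lx rx where lx: "{i. i < ?k \<and> x \<in> fst (ps ! i)} = {lx..rx}" using ivl assms(5) by blast
    obtain ly ry where ly: "{i. i < ?k \<and> y \<in> fst (ps ! i)} = {ly..ry}" using ivl assms(6) by blast
    have "a \<in> {i. i < ?k \<and> x \<in> fst (ps ! i)}" "b \<in> {i. i < ?k \<and> x \<in> fst (ps ! i)}"
      "a \<in> {i. i < ?k \<and> y \<in> fst (ps ! i)}" "b \<in> {i. i < ?k \<and> y \<in> fst (ps ! i)}"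
      using ab(1,2) by auto
    then have "a \<in> {lx..rx}" "b \<in> {lx..rx}" "a \<in> {ly..ry}" "b \<in> {ly..ry}" unfolding lx ly by auto
    then have "a + 1 \<in> {lx..rx}" "a + 1 \<in> {ly..ry}" using ab(3) by auto
    then have "a + 1 \<in> {i. i < ?k \<and> x \<in> fst (ps ! i)}" "a + 1 \<in> {i. i < ?k \<and> y \<in> fst (ps ! i)}"
      unfolding lx ly by auto
    then have a1: "a + 1 < ?k" "x \<in> fst (ps ! (a+1))" "y \<in> fst (ps ! (a+1))" by auto
    have xa: "x \<in> fst (ps ! a)" "y \<in> fst (ps ! a)" "a < ?k" using ab by auto
    obtain u where u: "u \<in> fst (ps ! a) \<union> verts_opt (snd (ps ! a))" "u \<notin> fst (ps ! (a+1))"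
      using fcond[of "a+1"] a1 by auto
    obtain w where w: "w \<in> fst (ps ! (a+1)) \<union> verts_opt (snd (ps ! (a+1)))" "w \<notin> fst (ps ! a)"
      using fcond[of "a+1"] a1 by auto
    obtain C1 where C1: "C1 \<in> set (cliques T)" "fst (ps ! a) \<union> {u} \<subseteq> C1" using at_pos[OF xa(3) u(1)] by (elim bexE)
    obtain C2 where C2: "C2 \<in> set (cliques T)" "fst (ps ! (a+1)) \<union> {w} \<subseteq> C2" using at_pos[OF a1(1) w(1)] by (elim bexE)
    have uQ: "u \<in> verts (QNode ps)" using u(1) S_own[OF xa(3)] own_verts[of "QNode ps"] Vi_sub[OF xa(3)] by blast
    have wQ: "w \<in> verts (QNode ps)" using w(1) S_own[OF a1(1)] own_verts[of "QNode ps"] Vi_sub[OF a1(1)] by blast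
    have uj: "j \<le> a" if j: "j < ?k" "u \<in> fst (ps ! j) \<union> verts_opt (snd (ps ! j))" for j
    proof (cases "u \<in> fst (ps ! a)")
      case True
      then have uo: "u \<in> own (QNode ps)" using S_own[OF xa(3)] by blast
      then have "u \<notin> verts_opt (snd (ps ! j))" using own_Vi[OF j(1)] by blast
      then have uj: "u \<in> fst (ps ! j)" using j(2) by blast
      obtain l r where lr: "{i. i < ?k \<and> u \<in> fst (ps ! i)} = {l..r}" using ivl uo by blast
      have "a \<in> {i. i < ?k \<and> u \<in> fst (ps ! i)}" "j \<in> {i. i < ?k \<and> u \<in> fst (ps ! i)}"
        "a + 1 \<notin> {i. i < ?k \<and> u \<in> fst (ps ! i)}" using True uj j(1) xa(3) u(2) by auto
      then have "a \<in> {l..r}" "j \<in> {l..r}" "a + 1 \<notin> {l..r}" unfolding lr by auto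
      then show ?thesis by auto
    next
      case False
      then have ua: "u \<in> verts_opt (snd (ps ! a))" using u(1) by blast
      then have "u \<notin> own (QNode ps)" using own_Vi[OF xa(3)] by blast
      then have "u \<notin> fst (ps ! j)" using S_own[OF j(1)] by blast
      then have "u \<in> verts_opt (snd (ps ! j))" using j(2) by blast
      then have "j = a" using Vi_Vi[OF xa(3) j(1)] ua by blast
      then show ?thesis by simp
    qed
    have wj: "j \<ge> a + 1" if j: "j < ?k" "w \<in> fst (ps ! j) \<union> verts_opt (snd (ps ! j))" for j
    proof (cases "w \<in> fst (ps ! (a+1))")
      case True
      then have wo: "w \<in> own (QNode ps)" using S_own[OF a1(1)] by blast
      then have "w \<notin> verts_opt (snd (ps ! j))" using own_Vi[OF j(1)] by blast
      then have wj: "w \<in> fst (ps ! j)" using j(2) by blast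
      obtain l r where lr: "{i. i < ?k \<and> w \<in> fst (ps ! i)} = {l..r}" using ivl wo by blast
      have "a + 1 \<in> {i. i < ?k \<and> w \<in> fst (ps ! i)}" "j \<in> {i. i < ?k \<and> w \<in> fst (ps ! i)}"
        "a \<notin> {i. i < ?k \<and> w \<in> fst (ps ! i)}" using True wj j(1) a1(1) w(2) by auto
      then have "a + 1 \<in> {l..r}" "j \<in> {l..r}" "a \<notin> {l..r}" unfolding lr by auto
      then show ?thesis by auto
    next
      case False
      then have wa: "w \<in> verts_opt (snd (ps ! (a+1)))" using w(1) by blast
      then have "w \<notin> own (QNode ps)" using own_Vi[OF a1(1)] by blast
      then have "w \<notin> fst (ps ! j)" using S_own[OF j(1)] by blast
      then have "w \<in> verts_opt (snd (ps ! j))" using j(2) by blast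
      then have "j = a + 1" using Vi_Vi[OF a1(1) j(1)] wa by blast
      then show ?thesis by simp
    qed
    have nc: "\<not> (\<exists>C\<in>set (cliques T). u \<in> C \<and> w \<in> C)"
    proof
      assume "\<exists>C\<in>set (cliques T). u \<in> C \<and> w \<in> C"
      then obtain C where C: "C \<in> set (cliques T)" "u \<in> C" "w \<in> C" by blast
      have "C \<inter> verts (QNode ps) \<noteq> {}" using C(2) uQ by blast
      then obtain j where j: "j < ?k" "C \<inter> verts (QNode ps) \<subseteq> fst (ps ! j) \<union> verts_opt (snd (ps ! j))"
        using where_[OF C(1)] by blast
      have "u \<in> fst (ps ! j) \<union> verts_opt (snd (ps ! j))" using j(2) C(2) uQ by blast
      then have "j \<le> a" by (rule uj[OF j(1)])
      moreover have "w \<in> fst (ps ! j) \<union> verts_opt (snd (ps ! j))" using j(2) C(3) wQ by blast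
      then have "j \<ge> a + 1" by (rule wj[OF j(1)])
      ultimately show False by simp
    qed
    have uw: "u \<noteq> w" using nc C1 by blast
    have uV: "u \<in> V" and wV: "w \<in> V" using uQ wQ QV by blast+
    have nuw: "(u, w) \<notin> E" by (rule nonadj[OF sg(1,2) cl uV wV nc])
    have ne: "u \<noteq> x" "u \<noteq> y" "w \<noteq> x" "w \<noteq> y" using u(2) w(2) xa(1,2) a1(2,3) by auto
    have c1: "x \<in> C1" "y \<in> C1" "u \<in> C1" using C1(2) xa(1,2) by auto
    have c2: "x \<in> C2" "y \<in> C2" "w \<in> C2" using C2(2) a1(2,3) by auto
    show ?thesis by (rule finish[OF assms(1) cl xy ne uw nuw C1(1) c1 C2(1) c2])
  next
    assume "\<exists>i < ?k. x \<in> fst (ps ! i) \<and> y \<in> fst (ps ! i) \<and> \<not> is_clique V E (verts_opt (snd (ps ! i)))"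
    then obtain i where i: "i < ?k" "x \<in> fst (ps ! i)" "y \<in> fst (ps ! i)"
      "\<not> is_clique V E (verts_opt (snd (ps ! i)))" by blast
    have "verts_opt (snd (ps ! i)) \<subseteq> V" using Vi_sub[OF i(1)] QV by blast
    then obtain u w where uw: "u \<in> verts_opt (snd (ps ! i))" "w \<in> verts_opt (snd (ps ! i))" "u \<noteq> w" "(u, w) \<notin> E"
      using i(4) unfolding is_clique_def by blast
    have ne: "u \<noteq> x" "u \<noteq> y" "w \<noteq> x" "w \<noteq> y" using uw(1,2) own_Vi[OF i(1)] assms(5,6) by auto
    have u1: "u \<in> fst (ps ! i) \<union> verts_opt (snd (ps ! i))" and w1: "w \<in> fst (ps ! i) \<union> verts_opt (snd (ps ! i))"
      using uw(1,2) by blast+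
    obtain C1 where C1: "C1 \<in> set (cliques T)" "fst (ps ! i) \<union> {u} \<subseteq> C1" using at_pos[OF i(1) u1] by (elim bexE)
    obtain C2 where C2: "C2 \<in> set (cliques T)" "fst (ps ! i) \<union> {w} \<subseteq> C2" using at_pos[OF i(1) w1] by (elim bexE)
    have c1: "x \<in> C1" "y \<in> C1" "u \<in> C1" using C1(2) i(2,3) by auto
    have c2: "x \<in> C2" "y \<in> C2" "w \<in> C2" using C2(2) i(2,3) by auto
    show ?thesis by (rule finish[OF assms(1) cl xy ne uw(3,4) C1(1) c1 C2(1) c2])
  qed
qed

end
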